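(* Under the standing setup (with $f$ possibly unbounded), let $t\ge0$ and let $(\pi_n)_{n\in\mathbb N}\subset P_t$ satisfy $\pi_n\subset\pi_{n+1}$ for all $n$ and $|\pi_n|_\infty\searrow0$ as $n\to\infty$. Then for all $u_0\in\mathbb R^d$, $\mathcal E_{\pi_n}u_0\nearrow\mathscr S(t)u_0$ as $n\to\infty$.
   Context: Standing setup: $d\in\mathbb N$; vectors in $\mathbb R^d$ with $\|u\|_\infty=\max_i|u_i|$; inequalities and suprema of vectors are componentwise; reals are identified with constant vectors. A $Q$-matrix is $q\in\mathbb R^{d\times d}$ with $q_{ii}\le0$, $q_{ij}\ge0$ ($i\ne j$), $\sum_jq_{ij}=0$. Let $\mathcal P$ be a set of $Q$-matrices and $f=(f_q)_{q\in\mathcal P}\subset\mathbb R^d$ with $\sup_{q\in\mathcal P}f_q=f_{q_0}=0$ for some $q_0\in\mathcal P$, such that $\mathcal Qu:=\sup_{q\in\mathcal P}(qu+f_q)$ is finite for every $u\in\mathbb R^d$. For $q\in\mathcal P$, $t\ge0$: $S_q(t)u_0:=e^{tq}u_0+\int_0^te^{sq}f_q\,ds$. For $h\ge0$: $\mathcal E_hu_0:=\sup_{q\in\mathcal P}S_q(h)u_0$. $P$ is the set of finite subsets $\pi\subset[0,\infty)$ with $0\in\pi$; $P_t:=\{\pi\in P:\max\pi=t\}$. For $\pi=\{t_0,\dots,t_m\}$ with $0=t_0<\dots<t_m$, $m\ge1$, $\mathcal E_\pi:=\mathcal E_{t_1-t_0}\circ\cdots\circ\mathcal E_{t_m-t_{m-1}}$,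 and $\mathcal E_{\{0\}}:=\mathcal E_0$; the mesh size is $|\pi|_\infty:=\max_j(t_j-t_{j-1})$, $|\{0\}|_\infty:=0$. The Nisio semigroup of $(\mathcal P,f)$ is $\mathscr S(t)u_0:=\sup_{\pi\in P_t}\mathcal E_\pi u_0$. *)

theory Defs
  imports "HOL-Analysis.Analysis"
begin

text \<open>Vectors in R^d are real^'d (componentwise order and componentwise Sup are
the library instances); d x d matrices are real^'d^'d with matrix product **.\<close>

definition is_Qmatrix :: "real^'d^'d \<Rightarrow> bool" where
  "is_Qmatrix q \<longleftrightarrow> (\<forall>i. q$i$i \<le> 0) \<and> (\<forall>i j. i \<noteq> j \<longrightarrow> q$i$j \<ge> 0)
      \<and> (\<forall>i. (\<Sum>j\<in>UNIV. q$i$j) = 0)"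

fun matpow :: "real^'d^'d \<Rightarrow> nat \<Rightarrow> real^'d^'d" where
  "matpow q 0 = mat 1"
| "matpow q (Suc k) = q ** matpow q k"

definition mexp :: "real \<Rightarrow> real^'d^'d \<Rightarrow> real^'d^'d" where
  "mexp t q = (\<Sum>k. (t ^ k / fact k) *\<^sub>R matpow q k)"

definition Sq :: "(real^'d^'d \<Rightarrow> real^'d) \<Rightarrow> real^'d^'d \<Rightarrow> real \<Rightarrow> real^'d \<Rightarrow> real^'d" where
  "Sq f q t u0 = mexp t q *v u0 + integral {0..t} (\<lambda>s. mexp s q *v f q)"

definition Eh :: "(real^'d^'d) set \<Rightarrow> (real^'d^'d \<Rightarrow> real^'d) \<Rightarrow> real \<Rightarrow> real^'d \<Rightarrow> real^'d" where
  "Eh P f h u0 = (SUP q\<in>P. Sq f q h u0)"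

definition partitions :: "real set set" where
  "partitions = {\<pi>. finite \<pi> \<and> \<pi> \<subseteq> {0..} \<and> 0 \<in> \<pi>}"

definition partitions_at :: "real \<Rightarrow> real set set" where
  "partitions_at t = {\<pi> \<in> partitions. Max \<pi> = t}"

fun comp_list :: "(real^'d^'d) set \<Rightarrow> (real^'d^'d \<Rightarrow> real^'d) \<Rightarrow> real list \<Rightarrow> real^'d \<Rightarrow> real^'d" where
  "comp_list P f (a # b # r) u = Eh P f (b - a) (comp_list P f (b # r) u)"
| "comp_list P f _ u = u"

definition Epi :: "(real^'d^'d) set \<Rightarrow> (real^'d^'d \<Rightarrow> real^'d) \<Rightarrow> real set \<Rightarrow> real^'d \<Rightarrow> real^'d" where
  "Epi P f \<pi> u = (if \<pi> = {0} then Eh P f 0 u else comp_list P f (sorted_list_of_set \<pi>) u)"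

definition mesh :: "real set \<Rightarrow> real" where
  "mesh \<pi> = (let xs = sorted_list_of_set \<pi> in
      Max (insert 0 (set (map2 (\<lambda>a b. b - a) xs (tl xs)))))"

definition Nisio :: "(real^'d^'d) set \<Rightarrow> (real^'d^'d \<Rightarrow> real^'d) \<Rightarrow> real \<Rightarrow> real^'d \<Rightarrow> real^'d" where
  "Nisio P f t u0 = (SUP \<pi>\<in>partitions_at t. Epi P f \<pi> u0)"

end

theory Submission imports Defs begin

typedef (overloaded) ('n::finite) sqm = "UNIV :: ((real^'n) \<Rightarrow>\<^sub>L (real^'n)) set"
  morphisms opr Opr by auto

setup_lifting type_definition_sqm

instantiation sqm :: (finite) real_normed_vector
begin
lift_definition norm_sqm :: "'a sqm \<Rightarrow> real" is norm .
lift_definition minus_sqm :: "'a sqm \<Rightarrow> 'a sqm \<Rightarrow> 'a sqm" is "(-)" .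
lift_definition plus_sqm :: "'a sqm \<Rightarrow> 'a sqm \<Rightarrow> 'a sqm" is "(+)" .
lift_definition uminus_sqm :: "'a sqm \<Rightarrow> 'a sqm" is "uminus" .
lift_definition zero_sqm :: "'a sqm" is "0" .
lift_definition scaleR_sqm :: "real \<Rightarrow> 'a sqm \<Rightarrow> 'a sqm" is "scaleR" .
definition dist_sqm :: "'a sqm \<Rightarrow> 'a sqm \<Rightarrow> real" where "dist_sqm a b = norm (a - b)"
definition sgn_sqm :: "'a sqm \<Rightarrow> 'a sqm" where "sgn_sqm x = scaleR (inverse (norm x)) x"
definition uniformity_sqm :: "('a sqm \<times> 'a sqm) filter" where
  "uniformity_sqm = (INF e\<in>{0 <..}. principal {(x, y). dist x y < e})"
definition open_sqm :: "'a sqm set \<Rightarrow> bool"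
  where "open_sqm S = (\<forall>x\<in>S. \<forall>\<^sub>F (x', y) in uniformity. x' = x \<longrightarrow> y \<in> S)"
instance
  apply standard
  unfolding dist_sqm_def open_sqm_def sgn_sqm_def uniformity_sqm_def
  apply (rule refl | (transfer, force simp: norm_triangle_ineq algebra_simps))+
  done
end

instantiation sqm :: (finite) real_normed_algebra_1
begin
lift_definition times_sqm :: "'a sqm \<Rightarrow> 'a sqm \<Rightarrow> 'a sqm" is "(o\<^sub>L)" .
lift_definition one_sqm :: "'a sqm" is "id_blinfun" .
instance
proof
  fix a b c :: "'a sqm" and r :: real
  show "a * b * c = a * (b * c)" by transfer (rule blinfun_eqI, simp)
  show "1 * a = a" by transfer (rule blinfun_eqI, simp)
  show "a * 1 = a" by transfer (rule blinfun_eqI, simp)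
  show "(a + b) * c = a * c + b * c" by transfer (rule blinfun_eqI, simp add: blinfun.bilinear_simps)
  show "a * (b + c) = a * b + a * c" by transfer (rule blinfun_eqI, simp add: blinfun.bilinear_simps)
  show "r *\<^sub>R a * b = r *\<^sub>R (a * b)" by transfer (rule blinfun_eqI, simp add: blinfun.bilinear_simps)
  show "a * r *\<^sub>R b = r *\<^sub>R (a * b)" by transfer (rule blinfun_eqI, simp add: blinfun.bilinear_simps)
  show "norm (a * b) \<le> norm a * norm b" by transfer (rule norm_blinfun_compose)
  show "norm (1::'a sqm) = 1" by transfer simp
  show "(0::'a sqm) \<noteq> 1"
  proof transfer
    show "(0::(real^'a) \<Rightarrow>\<^sub>L (real^'a)) \<noteq> id_blinfun"
      by (metis norm_blinfun_id norm_zero zero_neq_one)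
  qed
qed
end

instance sqm :: (finite) banach
proof
  fix X :: "nat \<Rightarrow> 'a sqm"
  assume "Cauchy X"
  hence "Cauchy (\<lambda>n. opr (X n))"
    unfolding Cauchy_def dist_sqm_def dist_norm by transfer simp
  then obtain L where L: "(\<lambda>n. opr (X n)) \<longlonglongrightarrow> L" using convergent_def complete_UNIV
    by (metis Cauchy_convergent_iff)
  have "X \<longlonglongrightarrow> Opr L"
    using L unfolding LIMSEQ_iff apply transfer by (simp add: Opr_inverse)
  thus "convergent X" by (auto simp: convergent_def)
qed


definition ap :: "'n::finite sqm \<Rightarrow> real^'n \<Rightarrow> real^'n" where
  "ap M v = blinfun_apply (opr M) v"

definition Bq :: "real^'n^'n \<Rightarrow> 'n::finite sqm" where
  "Bq q = Opr (Blinfun (\<lambda>v. q *v v))"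

definition Mat :: "'n::finite sqm \<Rightarrow> real^'n^'n" where
  "Mat M = matrix (ap M)"

lemma bl_mv: "bounded_linear (\<lambda>v::real^'n::finite. q *v v)"
  by (simp add: linear_conv_bounded_linear)

lemma ap_Bq[simp]: "ap (Bq q) v = q *v v"
  unfolding ap_def Bq_def by (simp add: Opr_inverse bounded_linear_Blinfun_apply[OF bl_mv])

lemma ap_mult[simp]: "ap (A * B) v = ap A (ap B v)"
  unfolding ap_def by transfer simp
lemma ap_one[simp]: "ap 1 v = v"
  unfolding ap_def by transfer simp
lemma ap_add_left[simp]: "ap (A + B) v = ap A v + ap B v"
  unfolding ap_def by transfer (simp add: blinfun.bilinear_simps)
lemma ap_scaleR_left[simp]: "ap (r *\<^sub>R A) v = r *\<^sub>R ap A v"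
  unfolding ap_def by transfer (simp add: blinfun.bilinear_simps)
lemma ap_add_right[simp]: "ap A (v + w) = ap A v + ap A w"
  unfolding ap_def by (simp add: blinfun.bilinear_simps)
lemma ap_diff_right[simp]: "ap A (v - w) = ap A v - ap A w"
  unfolding ap_def by (simp add: blinfun.bilinear_simps)
lemma ap_scaleR_right[simp]: "ap A (r *\<^sub>R v) = r *\<^sub>R ap A v"
  unfolding ap_def by (simp add: blinfun.bilinear_simps)
lemma ap_zero_right[simp]: "ap A 0 = 0"
  unfolding ap_def by (simp add: blinfun.bilinear_simps)

lemma ap_eqI: "(\<And>v. ap A v = ap B v) \<Longrightarrow> A = B"
  unfolding ap_def by (metis blinfun_eqI opr_inject)

lemma norm_ap: "norm (ap A v) \<le> norm A * norm v"
  unfolding ap_def by transfer (rule norm_blinfun)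

lemma bl_ap_left: "bounded_linear (\<lambda>A. ap A v)"
  apply (rule bounded_linear_intro[where K="norm v"])
    apply simp_all
  by (metis norm_ap mult.commute)

lemma bl_ap_right: "bounded_linear (ap A)"
  unfolding ap_def by (rule blinfun.bounded_linear_right)

lemma linear_ap: "linear (ap A)"
  using bl_ap_right bounded_linear.linear by blast

lemma Mat_mulv[simp]: "Mat M *v v = ap M v"
  unfolding Mat_def
  by (rule matrix_works) (use linear_ap in \<open>simp add: linear_def scalar_mult_eq_scaleR\<close>)

lemma Mat_Bq[simp]: "Mat (Bq q) = q"
  by (simp add: Mat_def ap_Bq[abs_def])

lemma linear_Mat: "linear Mat"
  apply (rule linearI)
  apply (simp_all add: Mat_def matrix_def vec_eq_iff)
  done

lemma norm_Mat: "norm (Mat M) \<le> real CARD('n) * real CARD('n) * norm (M::'n::finite sqm)"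
proof -
  have "norm (Mat M) \<le> (\<Sum>i\<in>UNIV. norm (Mat M $ i))"
    unfolding norm_vec_def by (rule L2_set_le_sum) simp
  also have "\<dots> \<le> (\<Sum>i\<in>(UNIV::'n set). (\<Sum>j\<in>(UNIV::'n set). norm M))"
  proof (rule sum_mono)
    fix i
    have "norm (Mat M $ i) \<le> (\<Sum>j\<in>UNIV. \<bar>Mat M $ i $ j\<bar>)" by (rule norm_le_l1_cart)
    also have "\<dots> \<le> (\<Sum>j\<in>(UNIV::'n set). norm M)"
    proof (rule sum_mono)
      fix j
      have "\<bar>Mat M $ i $ j\<bar> = \<bar>ap M (axis j 1) $ i\<bar>" by (simp add: Mat_def matrix_def)
      also have "\<dots> \<le> norm (ap M (axis j 1))" by (rule component_le_norm_cart)
      also have "\<dots> \<le> norm M" using norm_ap[of M "axis j (1::real)"] by simp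
      finally show "\<bar>Mat M $ i $ j\<bar> \<le> norm M" .
    qed
    finally show "norm (Mat M $ i) \<le> (\<Sum>j\<in>(UNIV::'n set). norm M)" .
  qed
  also have "\<dots> = real CARD('n) * real CARD('n) * norm M" by simp
  finally show ?thesis .
qed

lemma Mat_add: "Mat (A + B) = Mat A + Mat B"
  by (simp add: Mat_def matrix_def vec_eq_iff)

lemma Mat_scaleR: "Mat (r *\<^sub>R M) = r *\<^sub>R Mat M"
  by (simp add: Mat_def matrix_def vec_eq_iff)

lemma bl_Mat: "bounded_linear (Mat :: 'n::finite sqm \<Rightarrow> _)"
proof (rule bounded_linear_intro[where K="real CARD('n) * real CARD('n)"])
  fix x y :: "'n sqm" and r
  show "Mat (x + y) = Mat x + Mat y" by (rule Mat_add)
  show "Mat (r *\<^sub>R x) = r *\<^sub>R Mat x" by (rule Mat_scaleR)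
  show "norm (Mat x) \<le> norm x * (real CARD('n) * real CARD('n))"
    using norm_Mat[of x] by (simp add: mult.commute)
qed

lemma Bq_mult: "Bq (p ** q) = Bq p * Bq q"
  by (rule ap_eqI) (simp add: matrix_vector_mul_assoc)

lemma Bq_one: "Bq (mat 1) = 1"
  by (rule ap_eqI) simp

lemma Bq_matpow: "Bq (matpow q k) = Bq q ^ k"
  by (induction k) (simp_all add: Bq_one Bq_mult)

lemma mexp_eq: "mexp t q = Mat (exp (t *\<^sub>R Bq q))"
proof -
  have s: "summable (\<lambda>n. (t *\<^sub>R Bq q)^n /\<^sub>R fact n)" by (rule summable_exp_generic)
  have e: "\<And>n. Mat ((t *\<^sub>R Bq q)^n /\<^sub>R fact n) = (t ^ n / fact n) *\<^sub>R matpow q n"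
  proof -
    fix n
    have "(t *\<^sub>R Bq q)^n /\<^sub>R fact n = (t ^ n / fact n) *\<^sub>R Bq (matpow q n)"
      by (simp add: scaleR_power Bq_matpow divide_inverse mult.commute)
    thus "Mat ((t *\<^sub>R Bq q)^n /\<^sub>R fact n) = (t ^ n / fact n) *\<^sub>R matpow q n"
      by (simp add: Mat_scaleR)
  qed
  have "Mat (exp (t *\<^sub>R Bq q)) = (\<Sum>n. Mat ((t *\<^sub>R Bq q)^n /\<^sub>R fact n))"
    unfolding exp_def using bounded_linear.suminf[OF bl_Mat s] by simp
  thus ?thesis unfolding mexp_def by (simp only: e)
qed

lemma mexp_mulv: "mexp t q *v v = ap (exp (t *\<^sub>R Bq q)) v"
  unfolding mexp_eq by (rule Mat_mulv)

abbreviation EE :: "real \<Rightarrow> real^'n^'n \<Rightarrow> 'n::finite sqm" where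
  "EE t q \<equiv> exp (t *\<^sub>R Bq q)"

lemma EE_add: "EE (s + t) q = EE s q * EE t q"
  by (simp add: scaleR_add_left exp_add_commuting)

lemma EE_zero[simp]: "EE 0 q = 1" by simp

lemma EE_deriv: "((\<lambda>s. ap (EE s q) w) has_vector_derivative ap (EE s q) (q *v w)) (at s within T)"
proof -
  have "((\<lambda>s. ap (EE s q) w) has_vector_derivative ap (EE s q * Bq q) w) (at s within T)"
    by (rule bounded_linear.has_vector_derivative[OF bl_ap_left exp_scaleR_has_vector_derivative_right])
  thus ?thesis by simp
qed

lemma EE_cont: "continuous_on S (\<lambda>s. ap (EE s q) w)"
  unfolding continuous_on_eq_continuous_within using has_vector_derivative_continuous[OF EE_deriv] by blast

lemma ap_exp_nonneg:
  assumes A: "\<And>w. 0 \<le> w \<Longrightarrow> 0 \<le> ap A w" and w: "0 \<le> w" and t: "0 \<le> t"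
  shows "0 \<le> ap (exp (t *\<^sub>R A)) w"
proof -
  have pw: "0 \<le> ap (A ^ n) w" for n
    by (induction n) (simp_all add: w A)
  have s: "summable (\<lambda>n. (t *\<^sub>R A)^n /\<^sub>R fact n)" by (rule summable_exp_generic)
  have s2: "summable (\<lambda>n. ap ((t *\<^sub>R A)^n /\<^sub>R fact n) w)"
    by (rule bounded_linear.summable[OF bl_ap_left s])
  have eq: "ap (exp (t *\<^sub>R A)) w = (\<Sum>n. ap ((t *\<^sub>R A)^n /\<^sub>R fact n) w)"
    unfolding exp_def by (rule bounded_linear.suminf[OF bl_ap_left s])
  show ?thesis
    unfolding less_eq_vec_def
  proof
    fix i
    have "(\<Sum>n. ap ((t *\<^sub>R A)^n /\<^sub>R fact n) w) $ i = (\<Sum>n. ap ((t *\<^sub>R A)^n /\<^sub>R fact n) w $ i)"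
      by (rule bounded_linear.suminf[OF bounded_linear_vec_nth s2])
    also have "\<dots> \<ge> 0"
    proof (rule suminf_nonneg)
      show "summable (\<lambda>n. ap ((t *\<^sub>R A)^n /\<^sub>R fact n) w $ i)"
        by (rule bounded_linear.summable[OF bounded_linear_vec_nth s2])
      fix n
      have "ap ((t *\<^sub>R A)^n /\<^sub>R fact n) w $ i = (t^n / fact n) * (ap (A^n) w $ i)"
        by (simp add: scaleR_power divide_inverse mult.commute)
      also have "\<dots> \<ge> 0" using pw[of n] t by (simp add: less_eq_vec_def)
      finally show "0 \<le> ap ((t *\<^sub>R A)^n /\<^sub>R fact n) w $ i" .
    qed
    finally show "0 $ i \<le> ap (exp (t *\<^sub>R A)) w $ i" using eq by simp
  qed
qed

lemma Q_shift_nonneg: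
  assumes Q: "is_Qmatrix q" and w: "0 \<le> w"
  shows "0 \<le> ap (Bq q + (\<Sum>i\<in>UNIV. \<bar>q$i$i\<bar>) *\<^sub>R 1) w"
  unfolding less_eq_vec_def
proof
  fix i
  let ?c = "\<Sum>i\<in>UNIV. \<bar>q$i$i\<bar>"
  have ci: "\<bar>q$i$i\<bar> \<le> ?c" by (rule member_le_sum) auto
  have "(q *v w) $ i = q$i$i * w$i + (\<Sum>j\<in>UNIV-{i}. q$i$j * w$j)"
    by (simp add: matrix_vector_mult_def sum.remove)
  moreover have "(\<Sum>j\<in>UNIV-{i}. q$i$j * w$j) \<ge> 0"
  proof (rule sum_nonneg)
    fix j assume "j \<in> UNIV - {i}"
    hence "q$i$j \<ge> 0" using Q by (auto simp: is_Qmatrix_def)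
    thus "q$i$j * w$j \<ge> 0" using w by (simp add: less_eq_vec_def)
  qed
  moreover have "q$i$i * w$i + ?c * w$i \<ge> 0"
  proof -
    have "(q$i$i + ?c) * w$i \<ge> 0" using ci w by (auto simp: less_eq_vec_def intro!: mult_nonneg_nonneg)
    thus ?thesis by (simp add: algebra_simps)
  qed
  ultimately show "0 $ i \<le> ap (Bq q + ?c *\<^sub>R 1) w $ i" by simp
qed

lemma EE_nonneg:
  assumes Q: "is_Qmatrix q" and w: "0 \<le> w" and t: "0 \<le> t"
  shows "0 \<le> ap (EE t q) w"
proof -
  define c where "c = (\<Sum>i\<in>UNIV. \<bar>q$i$i\<bar>)"
  define A where "A = Bq q + c *\<^sub>R (1::'a sqm)"
  have "t *\<^sub>R Bq q = t *\<^sub>R A + of_real (- (t * c))"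
    by (simp add: A_def of_real_def algebra_simps)
  hence "EE t q = exp (t *\<^sub>R A + of_real (- (t * c)))" by (simp only:)
  also have "\<dots> = exp (t *\<^sub>R A) * exp (of_real (- (t * c)))"
    by (rule exp_add_commuting) (simp add: of_real_def)
  finally have "EE t q = exp (t *\<^sub>R A) * exp (of_real (- (t * c)))" .
  moreover have "exp (of_real (- (t * c)) :: 'a sqm) = exp (- (t * c)) *\<^sub>R 1"
    by (simp only: exp_of_real) (simp add: of_real_def)
  ultimately have "ap (EE t q) w = exp (- (t * c)) *\<^sub>R ap (exp (t *\<^sub>R A)) w"
    by simp
  moreover have "0 \<le> ap (exp (t *\<^sub>R A)) w"
    by (rule ap_exp_nonneg[OF _ w t]) (use Q_shift_nonneg[OF Q] in \<open>simp add: A_def c_def\<close>)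
  ultimately show ?thesis by (simp add: scaleR_nonneg_nonneg)
qed

lemma EE_mono:
  assumes Q: "is_Qmatrix q" and vw: "v \<le> w" and t: "0 \<le> t"
  shows "ap (EE t q) v \<le> ap (EE t q) w"
  using EE_nonneg[OF Q _ t, of "w - v"] vw by simp

lemma EE_one:
  assumes Q: "is_Qmatrix q"
  shows "ap (EE t q) 1 = 1"
proof -
  have q1: "q *v 1 = 0"
    using Q by (simp add: is_Qmatrix_def matrix_vector_mult_def vec_eq_iff)
  have "\<exists>c. \<forall>x\<in>UNIV. ap (EE x q) 1 = c"
  proof (rule has_derivative_zero_constant)
    fix x :: real
    have "((\<lambda>s. ap (EE s q) 1) has_vector_derivative 0) (at x within UNIV)"
      using EE_deriv[of q 1 x UNIV] q1 by simp
    thus "((\<lambda>s. ap (EE s q) 1) has_derivative (\<lambda>h. 0)) (at x within UNIV)"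
      by (simp add: has_vector_derivative_def)
  qed simp
  then obtain c where "\<And>x. ap (EE x q) 1 = c" by blast
  from this[of 0] this[of t] show ?thesis by simp
qed


lemma EE_int: "(\<lambda>s. ap (EE s q) y) integrable_on {a..b}"
  by (rule integrable_continuous_real[OF EE_cont])

lemma Sq_eq: "Sq f q t u = ap (EE t q) u + integral {0..t} (\<lambda>s. ap (EE s q) (f q))"
  unfolding Sq_def mexp_mulv ..

lemma int_shift:
  assumes h1: "0 \<le> h1" and h2: "0 \<le> h2"
  shows "integral {0..h1+h2} (\<lambda>s. ap (EE s q) y) =
    integral {0..h1} (\<lambda>s. ap (EE s q) y) + ap (EE h1 q) (integral {0..h2} (\<lambda>s. ap (EE s q) y))"
proof -
  let ?g = "\<lambda>s. ap (EE s q) y"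
  have "integral {0..h1+h2} ?g = integral {0..h1} ?g + integral {h1..h1+h2} ?g"
    using Henstock_Kurzweil_Integration.integral_combine[where a=0 and c=h1 and b="h1+h2" and f="?g"] h1 h2 EE_int by (metis add_increasing2 le_add_same_cancel1)
  moreover have "integral {h1..h1+h2} ?g = integral {0..h2} (?g \<circ> (+) h1)"
    using integral_shift_Icc_real[of 0 h2 ?g h1] by (simp add: add.commute)
  moreover have "?g \<circ> (+) h1 = ap (EE h1 q) \<circ> ?g"
    by (rule ext) (simp add: EE_add)
  moreover have "integral {0..h2} (ap (EE h1 q) \<circ> ?g) = ap (EE h1 q) (integral {0..h2} ?g)"
    by (rule integral_linear[OF EE_int bl_ap_right])
  ultimately show ?thesis by simp
qed

lemma Sq_semigroup:
  assumes h1: "0 \<le> h1" and h2: "0 \<le> h2"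
  shows "Sq f q (h1 + h2) u = Sq f q h1 (Sq f q h2 u)"
  unfolding Sq_eq int_shift[OF h1 h2] EE_add by (simp add: algebra_simps)

lemma int_le_const:
  fixes g :: "real \<Rightarrow> real^'n::finite"
  assumes h: "0 \<le> h" and gi: "g integrable_on {0..h}" and le: "\<And>s. s \<in> {0..h} \<Longrightarrow> g s \<le> z"
  shows "integral {0..h} g \<le> h *\<^sub>R z"
  unfolding less_eq_vec_def
proof
  fix i
  have "integral {0..h} g $ i = integral {0..h} ((\<lambda>x. x $ i) \<circ> g)"
    by (rule integral_linear[OF gi bounded_linear_vec_nth, symmetric])
  also have "\<dots> \<le> integral {0..h} (\<lambda>s. z $ i)"
    by (rule integral_le) (use le integrable_linear[OF gi bounded_linear_vec_nth] in \<open>auto simp: less_eq_vec_def\<close>)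
  also have "\<dots> = h * z $ i" using h by simp
  finally show "integral {0..h} g $ i \<le> (h *\<^sub>R z) $ i" by simp
qed

lemma int_ge_const:
  fixes g :: "real \<Rightarrow> real^'n::finite"
  assumes h: "0 \<le> h" and gi: "g integrable_on {0..h}" and le: "\<And>s. s \<in> {0..h} \<Longrightarrow> z \<le> g s"
  shows "h *\<^sub>R z \<le> integral {0..h} g"
  unfolding less_eq_vec_def
proof
  fix i
  have "integral {0..h} g $ i = integral {0..h} ((\<lambda>x. x $ i) \<circ> g)"
    by (rule integral_linear[OF gi bounded_linear_vec_nth, symmetric])
  moreover have "integral {0..h} (\<lambda>s. z $ i) \<le> integral {0..h} ((\<lambda>x. x $ i) \<circ> g)"
    by (rule integral_le) (use le integrable_linear[OF gi bounded_linear_vec_nth] in \<open>auto simp: less_eq_vec_def\<close>)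
  moreover have "integral {0..h} (\<lambda>s. z $ i) = h * z $ i" using h by simp
  ultimately show "(h *\<^sub>R z) $ i \<le> integral {0..h} g $ i" by (simp del: integral_const_real)
qed

lemma Sq_minus:
  assumes h: "0 \<le> h"
  shows "Sq f q h w - w = integral {0..h} (\<lambda>s. ap (EE s q) (q *v w + f q))"
proof -
  have "((\<lambda>s. ap (EE s q) (q *v w)) has_integral (ap (EE h q) w - ap (EE 0 q) w)) {0..h}"
    by (rule fundamental_theorem_of_calculus[OF h EE_deriv])
  hence "integral {0..h} (\<lambda>s. ap (EE s q) (q *v w)) = ap (EE h q) w - w"
    by (simp add: integral_unique)
  moreover have "integral {0..h} (\<lambda>s. ap (EE s q) (q *v w + f q)) =
     integral {0..h} (\<lambda>s. ap (EE s q) (q *v w)) + integral {0..h} (\<lambda>s. ap (EE s q) (f q))"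
    by (simp add: integral_add EE_int)
  ultimately show ?thesis unfolding Sq_eq by simp
qed

lemma Sq_upper:
  assumes Q: "is_Qmatrix q" and h: "0 \<le> h" and c: "q *v w + f q \<le> c *\<^sub>R 1"
  shows "Sq f q h w \<le> w + (h * c) *\<^sub>R 1"
proof -
  have "integral {0..h} (\<lambda>s. ap (EE s q) (q *v w + f q)) \<le> h *\<^sub>R (c *\<^sub>R 1)"
  proof (rule int_le_const[OF h EE_int])
    fix s :: real assume "s \<in> {0..h}"
    hence "ap (EE s q) (q *v w + f q) \<le> ap (EE s q) (c *\<^sub>R 1)"
      by (intro EE_mono[OF Q c]) auto
    thus "ap (EE s q) (q *v w + f q) \<le> c *\<^sub>R 1" by (simp only: ap_scaleR_right EE_one[OF Q])
  qed
  thus ?thesis using Sq_minus[OF h, of f q w] by (simp add: algebra_simps)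
qed

lemma Sq_lower:
  assumes Q: "is_Qmatrix q" and h: "0 \<le> h" and c: "c *\<^sub>R 1 \<le> q *v w + f q"
  shows "w + (h * c) *\<^sub>R 1 \<le> Sq f q h w"
proof -
  have "h *\<^sub>R (c *\<^sub>R 1) \<le> integral {0..h} (\<lambda>s. ap (EE s q) (q *v w + f q))"
  proof (rule int_ge_const[OF h EE_int])
    fix s :: real assume "s \<in> {0..h}"
    hence "ap (EE s q) (c *\<^sub>R 1) \<le> ap (EE s q) (q *v w + f q)"
      by (intro EE_mono[OF Q c]) auto
    thus "c *\<^sub>R 1 \<le> ap (EE s q) (q *v w + f q)" by (simp only: ap_scaleR_right EE_one[OF Q])
  qed
  thus ?thesis using Sq_minus[OF h, of f q w] by (simp add: algebra_simps)
qed

lemma Sq_mono: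
  assumes Q: "is_Qmatrix q" and h: "0 \<le> h" and vw: "v \<le> w"
  shows "Sq f q h v \<le> Sq f q h w"
  unfolding Sq_eq using EE_mono[OF Q vw h] by simp

lemma Sq_transl:
  assumes Q: "is_Qmatrix q"
  shows "Sq f q h (w + c *\<^sub>R 1) = Sq f q h w + c *\<^sub>R 1"
  unfolding Sq_eq by (simp add: EE_one[OF Q] algebra_simps)

lemma Sq_le_max:
  assumes Q: "is_Qmatrix q" and h: "0 \<le> h" and f: "f q \<le> 0" and w: "w \<le> b *\<^sub>R 1"
  shows "Sq f q h w \<le> b *\<^sub>R 1"
proof -
  have "ap (EE h q) w \<le> ap (EE h q) (b *\<^sub>R 1)" by (rule EE_mono[OF Q w h])
  hence "ap (EE h q) w \<le> b *\<^sub>R 1" by (simp only: ap_scaleR_right EE_one[OF Q])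
  moreover have "integral {0..h} (\<lambda>s. ap (EE s q) (f q)) \<le> h *\<^sub>R 0"
  proof (rule int_le_const[OF h EE_int])
    fix s :: real assume "s \<in> {0..h}"
    thus "ap (EE s q) (f q) \<le> 0" using EE_mono[OF Q f, of s] by simp
  qed
  ultimately show ?thesis unfolding Sq_eq by (metis add_mono add_0_right scaleR_zero_right)
qed


lemma vec_le_norm: "w \<le> norm w *\<^sub>R (1::real^'n::finite)"
  unfolding less_eq_vec_def using component_le_norm_cart by (auto intro: abs_le_D1)

lemma vec_ge_norm: "(- norm w) *\<^sub>R (1::real^'n::finite) \<le> w"
  unfolding less_eq_vec_def by (simp, metis abs_le_iff component_le_norm_cart minus_le_iff)

locale nis =
  fixes P :: "(real^'d^'d) set" and f :: "real^'d^'d \<Rightarrow> real^'d" and q0 :: "real^'d^'d"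
  assumes Q: "\<And>q. q \<in> P \<Longrightarrow> is_Qmatrix q"
    and q0: "q0 \<in> P" and fq0: "f q0 = 0" and fle: "\<And>q. q \<in> P \<Longrightarrow> f q \<le> 0"
    and fin: "\<And>u :: real^'d. bdd_above ((\<lambda>q. q *v u + f q) ` P)"
begin

lemma Pne: "P \<noteq> {}" using q0 by auto

lemma Sq_bdd: assumes h: "0 \<le> h" shows "bdd_above ((\<lambda>q. Sq f q h w) ` P)"
  unfolding bdd_above_def
  by (rule exI[where x="norm w *\<^sub>R 1"]) (auto intro!: Sq_le_max[OF Q h fle vec_le_norm])

lemma Eh_ge: "q \<in> P \<Longrightarrow> 0 \<le> h \<Longrightarrow> Sq f q h w \<le> Eh P f h w"
  unfolding Eh_def by (rule cSUP_upper[OF _ Sq_bdd])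

lemma Eh_le: "(\<And>q. q \<in> P \<Longrightarrow> Sq f q h w \<le> z) \<Longrightarrow> Eh P f h w \<le> z"
  unfolding Eh_def by (rule cSUP_least[OF Pne])

lemma Sq_q0: "Sq f q0 h w = ap (EE h q0) w"
  unfolding Sq_eq fq0 by simp

lemma Eh_ub: "0 \<le> h \<Longrightarrow> w \<le> b *\<^sub>R 1 \<Longrightarrow> Eh P f h w \<le> b *\<^sub>R 1"
  by (rule Eh_le) (rule Sq_le_max[OF Q _ fle])

lemma Eh_lb: assumes h: "0 \<le> h" and w: "a *\<^sub>R 1 \<le> w" shows "a *\<^sub>R 1 \<le> Eh P f h w"
proof -
  have "ap (EE h q0) (a *\<^sub>R 1) \<le> ap (EE h q0) w" by (rule EE_mono[OF Q[OF q0] w h])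
  hence "a *\<^sub>R 1 \<le> Sq f q0 h w" by (simp only: Sq_q0 ap_scaleR_right EE_one[OF Q[OF q0]])
  also have "\<dots> \<le> Eh P f h w" by (rule Eh_ge[OF q0 h])
  finally show ?thesis .
qed

lemma Eh_nonexp:
  assumes h: "0 \<le> h" and vw: "v \<le> w + c *\<^sub>R 1"
  shows "Eh P f h v \<le> Eh P f h w + c *\<^sub>R 1"
proof (rule Eh_le)
  fix q assume q: "q \<in> P"
  have "Sq f q h v \<le> Sq f q h (w + c *\<^sub>R 1)" by (rule Sq_mono[OF Q[OF q] h vw])
  also have "\<dots> = Sq f q h w + c *\<^sub>R 1" by (rule Sq_transl[OF Q[OF q]])
  also have "\<dots> \<le> Eh P f h w + c *\<^sub>R 1" using Eh_ge[OF q h] by simp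
  finally show "Sq f q h v \<le> Eh P f h w + c *\<^sub>R 1" .
qed

lemma Eh_mono: "0 \<le> h \<Longrightarrow> v \<le> w \<Longrightarrow> Eh P f h v \<le> Eh P f h w"
  using Eh_nonexp[of h v w 0] by simp

lemma Eh_semi:
  assumes h1: "0 \<le> h1" and h2: "0 \<le> h2"
  shows "Eh P f (h1 + h2) w \<le> Eh P f h1 (Eh P f h2 w)"
proof (rule Eh_le)
  fix q assume q: "q \<in> P"
  have "Sq f q (h1 + h2) w = Sq f q h1 (Sq f q h2 w)" by (rule Sq_semigroup[OF h1 h2])
  also have "\<dots> \<le> Sq f q h1 (Eh P f h2 w)" by (rule Sq_mono[OF Q[OF q] h1 Eh_ge[OF q h2]])
  also have "\<dots> \<le> Eh P f h1 (Eh P f h2 w)" by (rule Eh_ge[OF q h1])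
  finally show "Sq f q (h1 + h2) w \<le> Eh P f h1 (Eh P f h2 w)" .
qed

lemma const_C:
  "\<exists>C. \<forall>q\<in>P. \<forall>w::real^'d. a *\<^sub>R 1 \<le> w \<longrightarrow> w \<le> b *\<^sub>R 1 \<longrightarrow> q *v w + f q \<le> C *\<^sub>R (1::real^'d)"
proof -
  define v where "v i = (\<chi> j. if j = i then a else b)" for i :: 'd
  have "\<forall>i. \<exists>M. \<forall>q\<in>P. q *v v i + f q \<le> M"
    using fin by (auto simp: bdd_above_def)
  then obtain M where M: "\<And>i q. q \<in> P \<Longrightarrow> q *v v i + f q \<le> M i" by metis
  define C where "C = (\<Sum>i\<in>UNIV. \<bar>M i $ i\<bar>)"
  show ?thesis
  proof (intro exI ballI allI impI)
    fix q and w :: "real^'d" assume q: "q \<in> P" and wa: "a *\<^sub>R 1 \<le> w" and wb: "w \<le> b *\<^sub>R 1"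
    show "q *v w + f q \<le> C *\<^sub>R 1"
      unfolding less_eq_vec_def
    proof
      fix i
      have "(q *v w) $ i \<le> (q *v v i) $ i"
        unfolding matrix_vector_mult_def
      proof (simp, rule sum_mono)
        fix j
        show "q $ i $ j * w $ j \<le> q $ i $ j * v i $ j"
        proof (cases "j = i")
          case True
          have "q$i$i \<le> 0" using Q[OF q] by (simp add: is_Qmatrix_def)
          moreover have "a \<le> w $ i" using wa by (simp add: less_eq_vec_def)
          ultimately show ?thesis using True by (simp add: v_def mult_left_mono_neg)
        next
          case False
          have "q$i$j \<ge> 0" using Q[OF q] False by (simp add: is_Qmatrix_def)
          moreover have "w $ j \<le> b" using wb by (simp add: less_eq_vec_def)
          ultimately show ?thesis using False by (simp add: v_def mult_left_mono)
        qed
      qed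
      moreover have "(q *v v i + f q) $ i \<le> M i $ i" using M[OF q, of i] by (simp add: less_eq_vec_def)
      moreover have "M i $ i \<le> C" unfolding C_def
        using member_le_sum[of i UNIV "\<lambda>i. \<bar>M i $ i\<bar>"] by simp
      ultimately show "(q *v w + f q) $ i \<le> (C *\<^sub>R 1) $ i" by simp
    qed
  qed
qed

lemma const_C0:
  "\<exists>C0. \<forall>w::real^'d. a *\<^sub>R 1 \<le> w \<longrightarrow> w \<le> b *\<^sub>R 1 \<longrightarrow> (- C0) *\<^sub>R (1::real^'d) \<le> q0 *v w + f q0"
proof -
  define C0 where "C0 = (\<Sum>i\<in>UNIV. \<Sum>j\<in>UNIV. \<bar>q0$i$j\<bar>) * (\<bar>a\<bar> + \<bar>b\<bar>)"
  show ?thesis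
  proof (intro exI allI impI)
    fix w :: "real^'d" assume wa: "a *\<^sub>R 1 \<le> w" and wb: "w \<le> b *\<^sub>R 1"
    show "(- C0) *\<^sub>R 1 \<le> q0 *v w + f q0"
      unfolding less_eq_vec_def fq0
    proof
      fix i
      have wj: "\<bar>w $ j\<bar> \<le> \<bar>a\<bar> + \<bar>b\<bar>" for j
      proof -
        have "a \<le> w$j" "w$j \<le> b" using wa wb by (auto simp: less_eq_vec_def)
        thus ?thesis by linarith
      qed
      have "\<bar>(q0 *v w) $ i\<bar> \<le> (\<Sum>j\<in>UNIV. \<bar>q0$i$j * w$j\<bar>)"
        unfolding matrix_vector_mult_def by (simp add: sum_abs)
      also have "\<dots> \<le> (\<Sum>j\<in>UNIV. \<bar>q0$i$j\<bar> * (\<bar>a\<bar> + \<bar>b\<bar>))"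
        by (rule sum_mono) (simp add: abs_mult mult_left_mono wj)
      also have "\<dots> = (\<Sum>j\<in>UNIV. \<bar>q0$i$j\<bar>) * (\<bar>a\<bar> + \<bar>b\<bar>)" by (simp add: sum_distrib_right)
      also have "\<dots> \<le> C0" unfolding C0_def
        by (rule mult_right_mono[OF member_le_sum]) (auto intro: sum_nonneg)
      finally show "((- C0) *\<^sub>R 1) $ i \<le> (q0 *v w + 0) $ i" by simp
    qed
  qed
qed

end


fun gl :: "real \<Rightarrow> real list \<Rightarrow> bool" where
  "gl \<delta> (a # b # r) = (b - a \<le> \<delta> \<and> gl \<delta> (b # r))"
| "gl \<delta> _ = True"

lemma gl_insort:
  assumes "sorted xs" "gl \<delta> xs" "0 \<le> \<delta>" "xs \<noteq> []" "hd xs \<le> x" "x \<le> last xs"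
  shows "gl \<delta> (insort x xs)"
  using assms
proof (induction xs rule: induct_list012)
  case (3 a b r)
  show ?case
  proof (cases "x \<le> a")
    case True
    hence "x = a" using 3 by simp
    thus ?thesis using 3 by simp
  next
    case False
    show ?thesis
    proof (cases "x \<le> b")
      case True
      thus ?thesis using False 3 by simp
    next
      case F2: False
      have "gl \<delta> (insort x (b # r))"
        by (rule "3.IH"(2)) (use 3 F2 in \<open>auto split: if_splits\<close>)
      moreover have "insort x (b # r) = b # insort x r" using F2 by simp
      ultimately show ?thesis using False 3 by simp
    qed
  qed
qed auto

lemma sorted_hd_le: "sorted xs \<Longrightarrow> y \<in> set xs \<Longrightarrow> hd xs \<le> y"
  by (cases xs) auto

lemma sorted_le_last: "sorted xs \<Longrightarrow> y \<in> set xs \<Longrightarrow> y \<le> last xs"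
proof (induction xs)
  case (Cons a xs)
  thus ?case by (cases xs) auto
qed simp

context nis
begin

abbreviation CL where "CL xs u \<equiv> comp_list P f xs u"

definition inbox where "inbox a b w \<longleftrightarrow> a *\<^sub>R 1 \<le> w \<and> w \<le> b *\<^sub>R (1::real^'d)"

lemma Eh_box: "0 \<le> h \<Longrightarrow> inbox a b w \<Longrightarrow> inbox a b (Eh P f h w)"
  unfolding inbox_def using Eh_ub Eh_lb by blast

lemma exists_K:
  "\<exists>K\<ge>0. \<forall>w h1 h2. inbox a b w \<longrightarrow> 0 \<le> h1 \<longrightarrow> 0 \<le> h2 \<longrightarrow>
     Eh P f h1 (Eh P f h2 w) \<le> Eh P f (h1 + h2) w + ((h1 + h2) * K) *\<^sub>R 1"
proof -
  obtain C where C: "\<And>q w. q \<in> P \<Longrightarrow> a *\<^sub>R 1 \<le> w \<Longrightarrow> w \<le> b *\<^sub>R 1 \<Longrightarrow> q *v w + f q \<le> C *\<^sub>R (1::real^'d)"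
    using const_C[of a b] by blast
  obtain C0 where C0: "\<And>w. a *\<^sub>R 1 \<le> w \<Longrightarrow> w \<le> b *\<^sub>R 1 \<Longrightarrow> (- C0) *\<^sub>R (1::real^'d) \<le> q0 *v w + f q0"
    using const_C0[of a b] by blast
  have up: "Eh P f h w \<le> w + (h * C) *\<^sub>R 1" if "inbox a b w" "0 \<le> h" for w h
  proof (rule Eh_le)
    fix q assume q: "q \<in> P"
    have c: "q *v w + f q \<le> C *\<^sub>R 1" using C[OF q] that(1) by (auto simp: inbox_def)
    show "Sq f q h w \<le> w + (h * C) *\<^sub>R 1"
      by (rule Sq_upper[where f=f and q=q and c=C and w=w and h=h, OF Q[OF q] that(2) c])
  qed
  have lo: "w + (h * (- C0)) *\<^sub>R 1 \<le> Eh P f h w" if "inbox a b w" "0 \<le> h" for w h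
  proof -
    have c: "(- C0) *\<^sub>R 1 \<le> q0 *v w + f q0" using C0 that(1) by (auto simp: inbox_def)
    show ?thesis using Sq_lower[where f=f and q=q0 and c="-C0" and w=w and h=h, OF Q[OF q0] that(2) c] Eh_ge[OF q0 that(2)] by (rule order_trans)
  qed
  show ?thesis
  proof (intro exI[where x="max 0 (C + C0)"] conjI allI impI)
    fix w :: "real^'d" and h1 h2 :: real assume w: "inbox a b w" and h1: "0 \<le> h1" and h2: "0 \<le> h2"
    have w2: "inbox a b (Eh P f h2 w)" by (rule Eh_box[OF h2 w])
    have "Eh P f h1 (Eh P f h2 w) \<le> Eh P f h2 w + (h1 * C) *\<^sub>R 1" by (rule up[OF w2 h1])
    also have "\<dots> \<le> w + (h2 * C) *\<^sub>R 1 + (h1 * C) *\<^sub>R 1" using up[OF w h2] by simp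
    also have "\<dots> = (w + ((h1 + h2) * (- C0)) *\<^sub>R 1) + ((h1 + h2) * (C + C0)) *\<^sub>R 1"
      by (simp add: algebra_simps)
    also have "\<dots> \<le> Eh P f (h1 + h2) w + ((h1 + h2) * (C + C0)) *\<^sub>R 1"
      using lo[OF w, of "h1 + h2"] h1 h2 by simp
    also have "\<dots> \<le> Eh P f (h1 + h2) w + ((h1 + h2) * max 0 (C + C0)) *\<^sub>R 1"
    proof -
      have "(h1 + h2) * (C + C0) \<le> (h1 + h2) * max 0 (C + C0)"
        using h1 h2 by (intro mult_left_mono) auto
      thus ?thesis by (simp add: less_eq_vec_def)
    qed
    finally show "Eh P f h1 (Eh P f h2 w) \<le> Eh P f (h1 + h2) w + ((h1 + h2) * max 0 (C + C0)) *\<^sub>R 1" .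
  qed simp
qed

lemma CL_box: "sorted xs \<Longrightarrow> inbox a b u \<Longrightarrow> inbox a b (CL xs u)"
proof (induction xs rule: induct_list012)
  case (3 x y zs)
  thus ?case by (auto intro!: Eh_box)
qed auto

lemma CL_nonexp: "sorted xs \<Longrightarrow> u \<le> v + c *\<^sub>R 1 \<Longrightarrow> CL xs u \<le> CL xs v + c *\<^sub>R 1"
proof (induction xs rule: induct_list012)
  case (3 x y zs)
  thus ?case by (auto intro!: Eh_nonexp)
qed auto

lemma CL_ins:
  assumes K: "0 \<le> K" and Kp: "\<And>w h1 h2. inbox a b w \<Longrightarrow> 0 \<le> h1 \<Longrightarrow> 0 \<le> h2 \<Longrightarrow>
     Eh P f h1 (Eh P f h2 w) \<le> Eh P f (h1 + h2) w + ((h1 + h2) * K) *\<^sub>R 1"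
  shows "sorted_wrt (<) xs \<Longrightarrow> gl \<delta> xs \<Longrightarrow> inbox a b u \<Longrightarrow> x \<notin> set xs \<Longrightarrow> xs \<noteq> [] \<Longrightarrow>
     hd xs < x \<Longrightarrow> x < last xs \<Longrightarrow>
     CL xs u \<le> CL (insort x xs) u \<and> CL (insort x xs) u \<le> CL xs u + (\<delta> * K) *\<^sub>R 1"
proof (induction xs rule: induct_list012)
  case (3 y z r)
  have sxs: "sorted (y # z # r)" using "3.prems"(1) by (rule strict_sorted_imp_sorted)
  have yz: "y < z" "z - y \<le> \<delta>" using "3.prems" by auto
  have wbox: "inbox a b (CL (z # r) u)" by (rule CL_box) (use sxs "3.prems" in auto)
  show ?case
  proof (cases "x < z")
    case True
    have ins: "insort x (y # z # r) = y # x # z # r" using True "3.prems" by simp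
    have eq: "z - y = (x - y) + (z - x)" by simp
    have "CL (y # z # r) u = Eh P f ((x - y) + (z - x)) (CL (z # r) u)" by (simp only: comp_list.simps eq)
    also have "\<dots> \<le> Eh P f (x - y) (Eh P f (z - x) (CL (z # r) u))"
      by (rule Eh_semi) (use "3.prems" True in auto)
    finally have l: "CL (y # z # r) u \<le> CL (insort x (y # z # r)) u" unfolding ins by simp
    have "CL (insort x (y # z # r)) u = Eh P f (x - y) (Eh P f (z - x) (CL (z # r) u))"
      unfolding ins by simp
    also have "\<dots> \<le> Eh P f ((x - y) + (z - x)) (CL (z # r) u) + (((x - y) + (z - x)) * K) *\<^sub>R 1"
      by (rule Kp[OF wbox]) (use "3.prems" True in auto)
    also have "\<dots> \<le> CL (y # z # r) u + (\<delta> * K) *\<^sub>R 1"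
    proof -
      have "((x - y) + (z - x)) * K \<le> \<delta> * K" using yz K by (intro mult_right_mono) auto
      thus ?thesis by (simp add: less_eq_vec_def)
    qed
    finally show ?thesis using l by simp
  next
    case False
    hence xz: "z < x" using "3.prems"(4) by (cases "x = z") auto
    have ins: "insort x (y # z # r) = y # insort x (z # r)" using xz yz by simp
    have ih: "CL (z # r) u \<le> CL (insort x (z # r)) u \<and> CL (insort x (z # r)) u \<le> CL (z # r) u + (\<delta> * K) *\<^sub>R 1"
      by (rule "3.IH"(2)) (use "3.prems" xz in auto)
    obtain r' where r': "insort x (z # r) = z # r'" using xz by simp
    have h: "0 \<le> z - y" using yz by simp
    have "CL (y # z # r) u \<le> CL (insort x (y # z # r)) u"
      unfolding ins r' using Eh_mono[OF h, of "CL (z # r) u" "CL (z # r') u"] ih r' by simp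
    moreover have "CL (insort x (y # z # r)) u \<le> CL (y # z # r) u + (\<delta> * K) *\<^sub>R 1"
      unfolding ins r' using Eh_nonexp[OF h, of "CL (z # r') u" "CL (z # r) u" "\<delta> * K"] ih r' by simp
    ultimately show ?thesis by simp
  qed
qed auto

end


lemma gl_of: "(\<And>g. g \<in> set (map2 (\<lambda>a b. b - a) xs (tl xs)) \<Longrightarrow> g \<le> \<delta>) \<Longrightarrow> gl \<delta> xs"
proof (induction xs rule: induct_list012)
  case (3 x y zs)
  have "y - x \<le> \<delta>" using "3.prems" by simp
  moreover have "gl \<delta> (y # zs)" by (rule "3.IH"(2)) (use "3.prems" in auto)
  ultimately show ?case by simp
qed auto

lemma gl_mesh: "gl (mesh \<pi>) (sorted_list_of_set \<pi>)"
  unfolding mesh_def Let_def by (rule gl_of) (rule Max_ge, auto)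

lemma mesh_nonneg: "0 \<le> mesh \<pi>"
  unfolding mesh_def Let_def by (rule Max_ge) auto

context nis
begin

lemma CL_set:
  assumes K: "0 \<le> K" and Kp: "\<And>w h1 h2. inbox a b w \<Longrightarrow> 0 \<le> h1 \<Longrightarrow> 0 \<le> h2 \<Longrightarrow>
     Eh P f h1 (Eh P f h2 w) \<le> Eh P f (h1 + h2) w + ((h1 + h2) * K) *\<^sub>R 1"
    and A: "finite A" "lo \<in> A" "hi \<in> A" and gA: "gl \<delta> (sorted_list_of_set A)" and d: "0 \<le> \<delta>"
    and u: "inbox a b u"
  shows "finite D \<Longrightarrow> D \<subseteq> {lo<..<hi} \<Longrightarrow> D \<inter> A = {} \<Longrightarrow>
    CL (sorted_list_of_set A) u \<le> CL (sorted_list_of_set (A \<union> D)) u \<and>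
    CL (sorted_list_of_set (A \<union> D)) u \<le> CL (sorted_list_of_set A) u + (real (card D) * \<delta> * K) *\<^sub>R 1 \<and>
    gl \<delta> (sorted_list_of_set (A \<union> D))"
proof (induction D rule: finite_induct)
  case empty
  thus ?case using gA by simp
next
  case (insert x D)
  define S where "S = A \<union> D"
  define xs where "xs = sorted_list_of_set S"
  have ih: "CL (sorted_list_of_set A) u \<le> CL xs u \<and>
    CL xs u \<le> CL (sorted_list_of_set A) u + (real (card D) * \<delta> * K) *\<^sub>R 1 \<and> gl \<delta> xs"
    using insert unfolding xs_def S_def by auto
  have fS: "finite S" using A insert by (simp add: S_def)
  have xS: "x \<notin> S" using insert by (auto simp: S_def)
  have eq: "sorted_list_of_set (A \<union> insert x D) = insort x xs"
    using sorted_list_of_set_insert[OF fS xS] by (simp add: xs_def S_def)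
  have setxs: "set xs = S" using fS by (simp add: xs_def)
  have sx: "sorted_wrt (<) xs" by (simp add: xs_def)
  have sx': "sorted xs" by (simp add: xs_def)
  have lo: "lo \<in> set xs" "hi \<in> set xs" using A by (auto simp: setxs S_def)
  have ne: "xs \<noteq> []" using lo by auto
  have xr: "lo < x" "x < hi" using insert by auto
  have hd: "hd xs < x" using sorted_hd_le[OF sx' lo(1)] xr by simp
  have lst: "x < last xs" using sorted_le_last[OF sx' lo(2)] xr by simp
  have step: "CL xs u \<le> CL (insort x xs) u \<and> CL (insort x xs) u \<le> CL xs u + (\<delta> * K) *\<^sub>R 1"
    by (rule CL_ins[OF K Kp sx _ u _ ne hd lst]) (use ih xS setxs in auto)
  have g: "gl \<delta> (insort x xs)"
    by (rule gl_insort[OF sx' _ d ne]) (use ih hd lst in auto)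
  have c: "real (card (insert x D)) = real (card D) + 1" using insert by simp
  show ?case
    unfolding eq
  proof (intro conjI)
    show "CL (sorted_list_of_set A) u \<le> CL (insort x xs) u" using ih step by (meson order_trans)
    have "CL (insort x xs) u \<le> CL (sorted_list_of_set A) u + (real (card D) * \<delta> * K) *\<^sub>R 1 + (\<delta> * K) *\<^sub>R 1"
      using ih step by (meson add_right_mono order_trans)
    thus "CL (insort x xs) u \<le> CL (sorted_list_of_set A) u + (real (card (insert x D)) * \<delta> * K) *\<^sub>R 1"
      by (simp add: c algebra_simps)
    show "gl \<delta> (insort x xs)" by (rule g)
  qed
qed

end


lemma part_facts:
  assumes "\<pi> \<in> partitions_at t"
  shows "finite \<pi>" "0 \<in> \<pi>" "t \<in> \<pi>" "\<pi> \<subseteq> {0..t}"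
proof -
  have f: "finite \<pi>" "0 \<in> \<pi>" "\<pi> \<subseteq> {0..}" "Max \<pi> = t"
    using assms by (auto simp: partitions_at_def partitions_def)
  show "finite \<pi>" "0 \<in> \<pi>" by (fact f)+
  show "t \<in> \<pi>" using Max_in[of \<pi>] f by auto
  show "\<pi> \<subseteq> {0..t}" using f Max_ge[of \<pi>] by fastforce
qed

lemma part_intro:
  assumes "finite \<pi>" "0 \<in> \<pi>" "t \<in> \<pi>" "\<pi> \<subseteq> {0..t}"
  shows "\<pi> \<in> partitions_at t"
proof -
  have "Max \<pi> = t" using assms by (intro Max_eqI) auto
  thus ?thesis using assms by (auto simp: partitions_at_def partitions_def)
qed

lemma part_diff:
  assumes p: "p \<in> partitions_at t" and p': "p' \<in> partitions_at t"
  shows "p' - p \<subseteq> {0<..<t}"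
proof
  fix x assume x: "x \<in> p' - p"
  hence "x \<in> {0..t}" using part_facts(4)[OF p'] by auto
  moreover have "x \<noteq> 0" "x \<noteq> t" using x part_facts(2,3)[OF p] by auto
  ultimately show "x \<in> {0<..<t}" by auto
qed

theorem mainTheorem5:
  fixes P :: "(real^'d^'d) set" and f :: "real^'d^'d \<Rightarrow> real^'d"
    and q0 :: "real^'d^'d" and t :: real and \<pi> :: "nat \<Rightarrow> real set" and u0 :: "real^'d"
  assumes Q: "\<And>q. q \<in> P \<Longrightarrow> is_Qmatrix q"
    and q0: "q0 \<in> P" and fq0: "f q0 = 0" and fle: "\<And>q. q \<in> P \<Longrightarrow> f q \<le> 0"
    and fin: "\<And>u :: real^'d. bdd_above ((\<lambda>q. q *v u + f q) ` P)"
    and t: "t \<ge> 0"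
    and pi: "\<And>n. \<pi> n \<in> partitions_at t"
    and nested: "\<And>n. \<pi> n \<subseteq> \<pi> (Suc n)"
    and mesh_dec: "antimono (\<lambda>n. mesh (\<pi> n))"
    and mesh_lim: "(\<lambda>n. mesh (\<pi> n)) \<longlonglongrightarrow> 0"
  shows "incseq (\<lambda>n. Epi P f (\<pi> n) u0) \<and> (\<lambda>n. Epi P f (\<pi> n) u0) \<longlonglongrightarrow> Nisio P f t u0"
proof (cases "t = 0")
  case True
  have p0: "p = {0}" if "p \<in> partitions_at t" for p
  proof -
    have "p \<subseteq> {0}" using part_facts(4)[OF that] True by simp
    thus ?thesis using part_facts(2)[OF that] by blast
  qed
  have pn: "\<pi> n = {0}" for n by (rule p0[OF pi])
  have pa: "partitions_at t = {{0}}"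
  proof (rule set_eqI)
    fix x
    show "x \<in> partitions_at t \<longleftrightarrow> x \<in> {{0}}"
      using p0[of x] pi[of 0] pn[of 0] by auto
  qed
  have N: "Nisio P f t u0 = Epi P f {0} u0" unfolding Nisio_def pa by simp
  show ?thesis unfolding pn N by simp
next
  case False
  hence tpos: "0 < t" using t by simp
  interpret nis P f q0 by unfold_locales (use Q q0 fq0 fle fin in auto)
  define a where "a = - norm u0"
  define b where "b = norm u0"
  have u: "inbox a b u0" unfolding inbox_def a_def b_def using vec_ge_norm vec_le_norm by blast
  obtain K where K: "0 \<le> K" and Kp: "\<And>w h1 h2. inbox a b w \<Longrightarrow> 0 \<le> h1 \<Longrightarrow> 0 \<le> h2 \<Longrightarrow>
     Eh P f h1 (Eh P f h2 w) \<le> Eh P f (h1 + h2) w + ((h1 + h2) * K) *\<^sub>R 1"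
    using exists_K[of a b] by blast
  have Epi_eq: "Epi P f p u0 = CL (sorted_list_of_set p) u0" if "p \<in> partitions_at t" for p
    using part_facts(3)[OF that] tpos by (auto simp: Epi_def)
  have mono: "Epi P f p u0 \<le> Epi P f p' u0" if p: "p \<in> partitions_at t" and p': "p' \<in> partitions_at t"
    and sub: "p \<subseteq> p'" for p p'
  proof -
    note fp = part_facts[OF p] and fp' = part_facts[OF p']
    have D: "p' - p \<subseteq> {0<..<t}" by (rule part_diff[OF p p'])
    have "p \<union> (p' - p) = p'" using sub by auto
    thus ?thesis
      using CL_set[OF K Kp fp(1) fp(2) fp(3) gl_mesh mesh_nonneg u, of "p' - p"] D fp' Epi_eq p p'
      by auto
  qed
  have upper: "Epi P f p u0 \<le> Epi P f (\<pi> n) u0 + (real (card p) * mesh (\<pi> n) * K) *\<^sub>R 1"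
    if p: "p \<in> partitions_at t" for p n
  proof -
    note fp = part_facts[OF p] and fn = part_facts[OF pi[of n]]
    have pu: "p \<union> \<pi> n \<in> partitions_at t" by (rule part_intro) (use fp fn in auto)
    have "Epi P f p u0 \<le> Epi P f (p \<union> \<pi> n) u0" by (rule mono[OF p pu]) auto
    also have "\<dots> = CL (sorted_list_of_set (\<pi> n \<union> (p - \<pi> n))) u0"
      using Epi_eq[OF pu] by (simp add: Un_commute)
    also have "\<dots> \<le> CL (sorted_list_of_set (\<pi> n)) u0 + (real (card (p - \<pi> n)) * mesh (\<pi> n) * K) *\<^sub>R 1"
      using CL_set[OF K Kp fn(1) fn(2) fn(3) gl_mesh mesh_nonneg u, of "p - \<pi> n"] fp(1) part_diff[OF pi[of n] p] by auto
    also have "\<dots> \<le> Epi P f (\<pi> n) u0 + (real (card p) * mesh (\<pi> n) * K) *\<^sub>R 1"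
    proof -
      have "card (p - \<pi> n) \<le> card p" by (rule card_mono) (use fp in auto)
      hence "real (card (p - \<pi> n)) * mesh (\<pi> n) * K \<le> real (card p) * mesh (\<pi> n) * K"
        using K mesh_nonneg by (intro mult_right_mono) auto
      thus ?thesis using Epi_eq[OF pi[of n]] by (simp add: less_eq_vec_def)
    qed
    finally show ?thesis .
  qed
  have bnd: "Epi P f p u0 \<le> b *\<^sub>R 1" if "p \<in> partitions_at t" for p
    using CL_box[OF _ u, of "sorted_list_of_set p"] Epi_eq[OF that] by (simp add: inbox_def)
  have inc: "incseq (\<lambda>n. Epi P f (\<pi> n) u0)"
    by (rule incseq_SucI, rule mono[OF pi pi nested])
  have ne: "partitions_at t \<noteq> {}" using pi by blast
  have Ni: "Nisio P f t u0 $ i = (SUP p\<in>partitions_at t. Epi P f p u0 $ i)" for i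
    unfolding Nisio_def Sup_vec_def by (simp add: image_comp)
  have bddi: "bdd_above ((\<lambda>p. Epi P f p u0 $ i) ` partitions_at t)" for i
    using bnd unfolding bdd_above_def less_eq_vec_def by (intro exI[where x=b]) fastforce
  have lim: "(\<lambda>n. Epi P f (\<pi> n) u0) \<longlonglongrightarrow> Nisio P f t u0"
  proof (rule vec_tendstoI)
    fix i
    define X where "X n = Epi P f (\<pi> n) u0 $ i" for n
    have Xinc: "incseq X" using inc unfolding X_def incseq_def less_eq_vec_def by blast
    have Xbdd: "bdd_above (range X)"
      using bddi[of i] pi unfolding X_def bdd_above_def by blast
    have Xle: "X n \<le> Nisio P f t u0 $ i" for n
      unfolding X_def Ni by (rule cSUP_upper[OF pi bddi])
    have "(SUP n. X n) = Nisio P f t u0 $ i"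
    proof (rule antisym)
      show "(SUP n. X n) \<le> Nisio P f t u0 $ i" by (rule cSUP_least) (use Xle in auto)
      show "Nisio P f t u0 $ i \<le> (SUP n. X n)"
        unfolding Ni
      proof (rule cSUP_least[OF ne])
        fix p assume p: "p \<in> partitions_at t"
        let ?g = "\<lambda>n. Epi P f p u0 $ i - real (card p) * mesh (\<pi> n) * K"
        have "?g \<longlonglongrightarrow> Epi P f p u0 $ i - real (card p) * 0 * K"
          by (intro tendsto_intros mesh_lim)
        moreover have "\<forall>n\<ge>0. ?g n \<le> (SUP n. X n)"
        proof (intro allI impI)
          fix n
          have "Epi P f p u0 $ i \<le> X n + real (card p) * mesh (\<pi> n) * K"
            using upper[OF p, of n] unfolding X_def less_eq_vec_def by simp
          moreover have "X n \<le> (SUP n. X n)" by (rule cSUP_upper[OF _ Xbdd]) simp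
          ultimately show "?g n \<le> (SUP n. X n)" by simp
        qed
        ultimately show "Epi P f p u0 $ i \<le> (SUP n. X n)"
          using LIMSEQ_le_const2 by fastforce
      qed
    qed
    moreover have "X \<longlonglongrightarrow> (SUP n. X n)" by (rule LIMSEQ_incseq_SUP[OF Xbdd Xinc])
    ultimately show "(\<lambda>n. Epi P f (\<pi> n) u0 $ i) \<longlonglongrightarrow> Nisio P f t u0 $ i" unfolding X_def by simp
  qed
  show ?thesis using inc lim by simp
qed

end
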